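(* For $\lambda\in\mathbb C$ let $T_\lambda=\begin{bmatrix}0&1&0\\0&0&0\\0&0&\lambda\end{bmatrix}\in M_3(\mathbb C)$. Then $C^*_e(\mathcal S_{T_\lambda})\cong M_2(\mathbb C)$ if $|\lambda|\le 1/2$, and $C^*_e(\mathcal S_{T_\lambda})\cong M_2(\mathbb C)\oplus\mathbb C$ if $|\lambda|>1/2$.
   Context: $\mathcal S_T=\mathrm{span}\{1,T,T^*\}$. For an operator system $\mathcal S\subseteq B(H)$, a boundary representation is an irreducible unital $*$-representation $\rho$ of $C^*(\mathcal S)$ such that $\rho$ is the only unital completely positive extension of $\rho|_{\mathcal S}$ to $C^*(\mathcal S)$; the Šilov ideal $\mathfrak S_{\mathcal S}$ is the intersection of the kernels of all boundary representations, and the C$^*$-envelope is $C^*_e(\mathcal S)=C^*(\mathcal S)/\mathfrak S_{\mathcal S}$ (equivalently, the C$^*$-algebra $C^*_e(\mathcal S)$ with a unital complete isometry $\iota:\mathcal S\to C^*_e(\mathcal S)$ generating it, such that for every unital complete isometry $\phi$ of $\mathcal S$ into a C$^*$-algebra there is a $*$-epimorphism $\pi:C^*(\phi(\mathcal S))\to C^*_e(\mathcal S)$ with $\pi\circ\phi=\iota$; unique up to $*$-isomorphism). *)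

theory Defs
  imports "Jordan_Normal_Form.Schur_Decomposition"
begin

definition T_lam :: "complex \<Rightarrow> complex mat" where
  "T_lam l = mat_of_rows_list 3 [[0,1,0],[0,0,0],[0,0,l]]"

definition opsys :: "nat \<Rightarrow> complex mat \<Rightarrow> complex mat set" where
  "opsys n T = {a \<cdot>\<^sub>m 1\<^sub>m n + b \<cdot>\<^sub>m T + c \<cdot>\<^sub>m mat_adjoint T | a b c. True}"

(* C^*(S): the C^*-subalgebra of M_n(C) generated by S (and the unit).
   In finite dimensions this is the unital *-subalgebra generated by S. *)
inductive_set cstar_gen :: "nat \<Rightarrow> complex mat set \<Rightarrow> complex mat set"
  for n :: nat and S :: "complex mat set" where
  gen: "x \<in> S \<Longrightarrow> x \<in> cstar_gen n S"
| one: "1\<^sub>m n \<in> cstar_gen n S"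
| add: "x \<in> cstar_gen n S \<Longrightarrow> y \<in> cstar_gen n S \<Longrightarrow> x + y \<in> cstar_gen n S"
| smult: "x \<in> cstar_gen n S \<Longrightarrow> c \<cdot>\<^sub>m x \<in> cstar_gen n S"
| mult: "x \<in> cstar_gen n S \<Longrightarrow> y \<in> cstar_gen n S \<Longrightarrow> x * y \<in> cstar_gen n S"
| adj: "x \<in> cstar_gen n S \<Longrightarrow> mat_adjoint x \<in> cstar_gen n S"

definition psd :: "nat \<Rightarrow> complex mat \<Rightarrow> bool" where
  "psd d M \<longleftrightarrow> M \<in> carrier_mat d d \<and>
     (\<forall>v \<in> carrier_vec d. let q = (\<Sum>i<d. cnj (v $ i) * (M *\<^sub>v v) $ i) in
        Im q = 0 \<and> Re q \<ge> 0)"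

definition blockmat :: "nat \<Rightarrow> nat \<Rightarrow> (nat \<Rightarrow> nat \<Rightarrow> complex mat) \<Rightarrow> complex mat" where
  "blockmat m n a = mat (m * n) (m * n)
     (\<lambda>(r, c). a (r div n) (c div n) $$ (r mod n, c mod n))"

definition lin_on :: "complex mat set \<Rightarrow> (complex mat \<Rightarrow> complex mat) \<Rightarrow> bool" where
  "lin_on A f \<longleftrightarrow> (\<forall>x\<in>A. \<forall>y\<in>A. f (x + y) = f x + f y) \<and>
                   (\<forall>x\<in>A. \<forall>c. f (c \<cdot>\<^sub>m x) = c \<cdot>\<^sub>m f x)"

definition ucp :: "nat \<Rightarrow> complex mat set \<Rightarrow> nat \<Rightarrow> (complex mat \<Rightarrow> complex mat) \<Rightarrow> bool" where
  "ucp n A k \<phi> \<longleftrightarrow> (\<forall>x\<in>A. \<phi> x \<in> carrier_mat k k) \<and> lin_on A \<phi> \<and> \<phi> (1\<^sub>m n) = 1\<^sub>m k \<and>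
     (\<forall>m a. (\<forall>i<m. \<forall>j<m. a i j \<in> A) \<longrightarrow> psd (m * n) (blockmat m n a) \<longrightarrow>
            psd (m * k) (blockmat m k (\<lambda>i j. \<phi> (a i j))))"

definition star_rep :: "nat \<Rightarrow> complex mat set \<Rightarrow> nat \<Rightarrow> (complex mat \<Rightarrow> complex mat) \<Rightarrow> bool" where
  "star_rep n A k \<rho> \<longleftrightarrow> (\<forall>x\<in>A. \<rho> x \<in> carrier_mat k k) \<and> lin_on A \<rho> \<and>
     (\<forall>x\<in>A. \<forall>y\<in>A. \<rho> (x * y) = \<rho> x * \<rho> y) \<and>
     (\<forall>x\<in>A. \<rho> (mat_adjoint x) = mat_adjoint (\<rho> x)) \<and> \<rho> (1\<^sub>m n) = 1\<^sub>m k"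

definition irreducible_rep :: "nat \<Rightarrow> complex mat set \<Rightarrow> nat \<Rightarrow> (complex mat \<Rightarrow> complex mat) \<Rightarrow> bool" where
  "irreducible_rep n A k \<rho> \<longleftrightarrow> star_rep n A k \<rho> \<and> 0 < k \<and>
     (\<forall>P \<in> carrier_mat k k. P * P = P \<and> mat_adjoint P = P \<and>
        (\<forall>x\<in>A. P * \<rho> x = \<rho> x * P) \<longrightarrow> P = 0\<^sub>m k k \<or> P = 1\<^sub>m k)"

definition boundary_rep :: "nat \<Rightarrow> complex mat set \<Rightarrow> nat \<Rightarrow> (complex mat \<Rightarrow> complex mat) \<Rightarrow> bool" where
  "boundary_rep n S k \<rho> \<longleftrightarrow> irreducible_rep n (cstar_gen n S) k \<rho> \<and>
     (\<forall>\<phi>. ucp n (cstar_gen n S) k \<phi> \<and> (\<forall>x\<in>S. \<phi> x = \<rho> x) \<longrightarrow>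
        (\<forall>x\<in>cstar_gen n S. \<phi> x = \<rho> x))"

definition silov_ideal :: "nat \<Rightarrow> complex mat set \<Rightarrow> complex mat set" where
  "silov_ideal n S = {x \<in> cstar_gen n S. \<forall>k \<rho>. boundary_rep n S k \<rho> \<longrightarrow> \<rho> x = 0\<^sub>m k k}"

definition star_hom_onto :: "complex mat set \<Rightarrow> complex mat set \<Rightarrow> (complex mat \<Rightarrow> complex mat) \<Rightarrow> bool" where
  "star_hom_onto A B \<pi> \<longleftrightarrow> \<pi> ` A = B \<and> lin_on A \<pi> \<and>
     (\<forall>x\<in>A. \<forall>y\<in>A. \<pi> (x * y) = \<pi> x * \<pi> y) \<and>
     (\<forall>x\<in>A. \<pi> (mat_adjoint x) = mat_adjoint (\<pi> x))"

(* C^*_e(S) = C^*(S) / Silov ideal is *-isomorphic to B  iff  there is a *-homomorphism of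
   C^*(S) onto B whose kernel is exactly the Silov ideal (first isomorphism theorem) *)
definition cenv_iso :: "nat \<Rightarrow> complex mat set \<Rightarrow> complex mat set \<Rightarrow> nat \<Rightarrow> bool" where
  "cenv_iso n S B k \<longleftrightarrow> (\<exists>\<pi>. star_hom_onto (cstar_gen n S) B \<pi> \<and>
     {x \<in> cstar_gen n S. \<pi> x = 0\<^sub>m k k} = silov_ideal n S)"

(* M_2(C) \<oplus> C realised as block-diagonal matrices diag(A, z) in M_3(C) *)
definition M2_plus_C :: "complex mat set" where
  "M2_plus_C = {A \<in> carrier_mat 3 3. A $$ (0,2) = 0 \<and> A $$ (1,2) = 0 \<and>
                   A $$ (2,0) = 0 \<and> A $$ (2,1) = 0}"

end

theory Submission
  imports Defs
begin


lemma less3: "(i::nat) < 3 \<longleftrightarrow> i = 0 \<or> i = 1 \<or> i = 2" by auto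
lemma less2: "(i::nat) < 2 \<longleftrightarrow> i = 0 \<or> i = 1" by auto
lemma sum3: "(\<Sum>i\<in>{0..<3::nat}. f i) = f 0 + f 1 + f 2" by (simp add: numeral_3_eq_3 numeral_2_eq_2)
lemma sum3': "(\<Sum>i<3::nat. f i) = f 0 + f 1 + f 2" by (simp add: numeral_3_eq_3 numeral_2_eq_2)
lemma sum2: "(\<Sum>i\<in>{0..<2::nat}. f i) = f 0 + f 1" by (simp add: numeral_2_eq_2)
lemma sum2': "(\<Sum>i<2::nat. f i) = f 0 + f 1" by (simp add: numeral_2_eq_2)

lemma adj_eq: "mat_adjoint (A::complex mat) = mat (dim_col A) (dim_row A) (\<lambda>(i,j). cnj (A $$ (j,i)))"
  unfolding mat_adjoint_def by (rule eq_matI) (auto simp: mat_of_rows_def)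

definition E :: "nat \<Rightarrow> nat \<Rightarrow> complex mat" where
  "E i j = mat 3 3 (\<lambda>(r,s). if r = i \<and> s = j then 1 else 0)"

lemma E_carrier[simp]: "E i j \<in> carrier_mat 3 3" by (simp add: E_def)
lemma E_dims[simp]: "dim_row (E i j) = 3" "dim_col (E i j) = 3" by (auto simp: E_def)

lemma T_eq: "T_lam l = mat 3 3 (\<lambda>(i,j). if i = 0 \<and> j = 1 then 1 else if i = 2 \<and> j = 2 then l else 0)"
  unfolding T_lam_def mat_of_rows_list_def by (rule eq_matI) (auto simp: less3)

lemma T_E: "T_lam l = E 0 1 + l \<cdot>\<^sub>m E 2 2"
  by (rule eq_matI) (auto simp: T_eq E_def less3)

lemma Tadj_E: "mat_adjoint (T_lam l) = E 1 0 + cnj l \<cdot>\<^sub>m E 2 2"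
  by (rule eq_matI) (auto simp: adj_eq T_eq E_def less3)

lemma TT: "T_lam l * T_lam l = (l*l) \<cdot>\<^sub>m E 2 2"
  by (rule eq_matI) (auto simp: T_eq E_def less3 scalar_prod_def sum3)

lemma TTa: "1\<^sub>m 3 + (-1) \<cdot>\<^sub>m (T_lam 0 * mat_adjoint (T_lam 0)) + (-1) \<cdot>\<^sub>m (mat_adjoint (T_lam 0) * T_lam 0) = E 2 2"
  by (rule eq_matI) (auto simp: T_eq adj_eq E_def less3 scalar_prod_def sum3)

lemma EE: "E i j * E j k = E i k" if "j < 3"
  using that by (intro eq_matI) (auto simp: E_def less3 scalar_prod_def sum3)

abbreviation "SS l \<equiv> opsys 3 (T_lam l)"
abbreviation "AA l \<equiv> cstar_gen 3 (SS l)"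

lemma T_in: "T_lam l \<in> AA l"
proof (rule cstar_gen.gen)
  have "T_lam l = 0 \<cdot>\<^sub>m 1\<^sub>m 3 + 1 \<cdot>\<^sub>m T_lam l + 0 \<cdot>\<^sub>m mat_adjoint (T_lam l)"
    by (rule eq_matI) (auto simp: T_eq adj_eq)
  then show "T_lam l \<in> SS l" unfolding opsys_def by blast
qed

lemma Ta_in: "mat_adjoint (T_lam l) \<in> AA l"
  by (rule cstar_gen.adj[OF T_in])

lemma E22_in: "E 2 2 \<in> AA l"
proof (cases "l = 0")
  case True
  have "1\<^sub>m 3 + (-1) \<cdot>\<^sub>m (T_lam 0 * mat_adjoint (T_lam 0)) + (-1) \<cdot>\<^sub>m (mat_adjoint (T_lam 0) * T_lam 0) \<in> AA 0"
    by (intro cstar_gen.add cstar_gen.smult cstar_gen.mult cstar_gen.one T_in Ta_in)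
  then show ?thesis using True TTa by simp
next
  case False
  have "(1/(l*l)) \<cdot>\<^sub>m (T_lam l * T_lam l) \<in> AA l"
    by (intro cstar_gen.smult cstar_gen.mult T_in)
  moreover have "(1/(l*l)) \<cdot>\<^sub>m (T_lam l * T_lam l) = E 2 2"
    using False by (simp add: TT, intro eq_matI) (auto simp: E_def)
  ultimately show ?thesis by simp
qed

lemma E01_in: "E 0 1 \<in> AA l"
proof -
  have "T_lam l + (-l) \<cdot>\<^sub>m E 2 2 \<in> AA l"
    by (intro cstar_gen.add cstar_gen.smult T_in E22_in)
  moreover have "T_lam l + (-l) \<cdot>\<^sub>m E 2 2 = E 0 1"
    by (rule eq_matI) (auto simp: T_eq E_def less3)
  ultimately show ?thesis by simp
qed

lemma E10_in: "E 1 0 \<in> AA l"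
proof -
  have "mat_adjoint (E 0 1) = E 1 0" by (rule eq_matI) (auto simp: adj_eq E_def less3)
  then show ?thesis using cstar_gen.adj[OF E01_in, of l] by simp
qed

lemma E00_in: "E 0 0 \<in> AA l"
  using cstar_gen.mult[OF E01_in E10_in, of l] EE[of 1 0 0] by simp

lemma E11_in: "E 1 1 \<in> AA l"
  using cstar_gen.mult[OF E10_in E01_in, of l] EE[of 0 1 1] by simp

lemma D_decomp: "x \<in> M2_plus_C \<Longrightarrow>
  x = x$$(0,0) \<cdot>\<^sub>m E 0 0 + x$$(0,1) \<cdot>\<^sub>m E 0 1 + x$$(1,0) \<cdot>\<^sub>m E 1 0 + x$$(1,1) \<cdot>\<^sub>m E 1 1 + x$$(2,2) \<cdot>\<^sub>m E 2 2"
  unfolding M2_plus_C_def by (rule eq_matI) (auto simp: E_def less3)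

lemma D_sub_A: "M2_plus_C \<subseteq> AA l"
proof
  fix x assume x: "x \<in> M2_plus_C"
  have "x$$(0,0) \<cdot>\<^sub>m E 0 0 + x$$(0,1) \<cdot>\<^sub>m E 0 1 + x$$(1,0) \<cdot>\<^sub>m E 1 0 + x$$(1,1) \<cdot>\<^sub>m E 1 1 + x$$(2,2) \<cdot>\<^sub>m E 2 2 \<in> AA l"
    by (intro cstar_gen.add cstar_gen.smult E00_in E01_in E10_in E11_in E22_in)
  then show "x \<in> AA l" using D_decomp[OF x] by simp
qed

lemma A_sub_D: "x \<in> AA l \<Longrightarrow> x \<in> M2_plus_C"
proof (induction rule: cstar_gen.induct)
  case (gen x)
  then obtain a b c where "x = a \<cdot>\<^sub>m 1\<^sub>m 3 + b \<cdot>\<^sub>m T_lam l + c \<cdot>\<^sub>m mat_adjoint (T_lam l)"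
    unfolding opsys_def by blast
  then show ?case by (simp add: M2_plus_C_def T_eq adj_eq)
next
  case one then show ?case by (simp add: M2_plus_C_def)
next
  case (add x y) then show ?case by (auto simp: M2_plus_C_def)
next
  case (smult x c) then show ?case by (auto simp: M2_plus_C_def)
next
  case (mult x y) then show ?case by (auto simp: M2_plus_C_def scalar_prod_def sum3)
next
  case (adj x) then show ?case by (auto simp: M2_plus_C_def adj_eq)
qed

lemma A_eq_D: "AA l = M2_plus_C"
  using A_sub_D D_sub_A by blast


lemma blockmat1: "x \<in> carrier_mat n n \<Longrightarrow> blockmat 1 n (\<lambda>i j. x) = x"
  unfolding blockmat_def by (rule eq_matI) auto

lemma psd_rank1:
  assumes "M \<in> carrier_mat d d" "\<And>i j. i < d \<Longrightarrow> j < d \<Longrightarrow> M $$ (i,j) = u i * cnj (u j)"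
  shows "psd d M"
  unfolding psd_def Let_def
proof (intro conjI ballI assms(1))
  fix v :: "complex vec" assume v: "v \<in> carrier_vec d"
  define s where "s = (\<Sum>j<d. cnj (u j) * v $ j)"
  have "(\<Sum>i<d. cnj (v $ i) * (M *\<^sub>v v) $ i) = (\<Sum>i<d. cnj (v $ i) * u i * s)"
  proof (rule sum.cong[OF refl])
    fix i assume i: "i \<in> {..<d}"
    have "(M *\<^sub>v v) $ i = (\<Sum>j\<in>{0..<d}. M $$ (i,j) * v $ j)"
      using i v assms(1) by (auto simp: scalar_prod_def)
    also have "\<dots> = u i * s" unfolding s_def
      using i assms(2) by (auto simp: sum_distrib_left lessThan_atLeast0 intro!: sum.cong)
    finally show "cnj (v $ i) * (M *\<^sub>v v) $ i = cnj (v $ i) * u i * s" by simp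
  qed
  also have "\<dots> = cnj s * s" unfolding s_def
    apply (simp add: sum_distrib_right sum_distrib_left mult.commute mult.left_commute)
    by (rule sum.swap)
  also have "\<dots> = complex_of_real ((Re s)\<^sup>2 + (Im s)\<^sup>2)"
    by (subst mult.commute) (rule complex_mult_cnj)
  finally have q: "(\<Sum>i<d. cnj (v $ i) * (M *\<^sub>v v) $ i) = complex_of_real ((Re s)\<^sup>2 + (Im s)\<^sup>2)" .
  show "Im (\<Sum>i<d. cnj (v $ i) * (M *\<^sub>v v) $ i) = 0" using q by simp
  show "0 \<le> Re (\<Sum>i<d. cnj (v $ i) * (M *\<^sub>v v) $ i)" using q by simp
qed

definition qf2 :: "complex mat \<Rightarrow> complex \<Rightarrow> complex \<Rightarrow> complex" where
  "qf2 M a b = cnj a * (M$$(0,0) * a + M$$(0,1) * b) + cnj b * (M$$(1,0) * a + M$$(1,1) * b)"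

lemma psd2D: assumes "psd 2 M" shows "Im (qf2 M a b) = 0 \<and> Re (qf2 M a b) \<ge> 0"
proof -
  define v where "v = vec 2 (\<lambda>i. if i = 0 then a else b)"
  have v: "v \<in> carrier_vec 2" by (simp add: v_def)
  have M: "M \<in> carrier_mat 2 2" using assms by (simp add: psd_def)
  have "(\<Sum>i<2. cnj (v $ i) * (M *\<^sub>v v) $ i) = qf2 M a b"
    using M by (simp add: sum2' v_def qf2_def scalar_prod_def sum2)
  then show ?thesis using assms v unfolding psd_def Let_def by metis
qed

lemma psd1D: assumes "psd 1 M" shows "Im (M$$(0,0)) = 0 \<and> Re (M$$(0,0)) \<ge> 0"
proof -
  define v where "v = vec 1 (\<lambda>i. 1::complex)"
  have v: "v \<in> carrier_vec 1" by (simp add: v_def)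
  have M: "M \<in> carrier_mat 1 1" using assms by (simp add: psd_def)
  have "(\<Sum>i<1. cnj (v $ i) * (M *\<^sub>v v) $ i) = M$$(0,0)"
    using M by (simp add: v_def scalar_prod_def)
  then show ?thesis using assms v unfolding psd_def Let_def by metis
qed

lemma real_lin_nonneg: assumes "\<And>t::real. a + t * c \<ge> 0" shows "c = 0"
proof (rule ccontr)
  assume "c \<noteq> 0"
  have "a + (-(\<bar>a\<bar>+1)/c) * c \<ge> 0" by (rule assms)
  moreover have "(-(\<bar>a\<bar>+1)/c) * c = -(\<bar>a\<bar>+1)" using \<open>c \<noteq> 0\<close> by simp
  ultimately show False by linarith
qed

lemma psd2_offdiag1: assumes "psd 2 M" "M$$(1,1) = 0" shows "M$$(0,1) = 0 \<and> M$$(1,0) = 0"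
proof -
  let ?u = "M$$(0,1) + M$$(1,0)" and ?w = "M$$(0,1) - M$$(1,0)"
  have h1: "\<And>t::real. Re (M$$(0,0)) + t * Re ?u \<ge> 0"
  proof -
    fix t :: real show "Re (M$$(0,0)) + t * Re ?u \<ge> 0"
      using psd2D[OF assms(1), of 1 "of_real t"] assms(2) by (simp add: qf2_def algebra_simps)
  qed
  have h2: "\<And>t::real. Re (M$$(0,0)) + t * (- Im ?w) \<ge> 0"
  proof -
    fix t :: real show "Re (M$$(0,0)) + t * (- Im ?w) \<ge> 0"
      using psd2D[OF assms(1), of 1 "\<i> * of_real t"] assms(2) by (simp add: qf2_def algebra_simps)
  qed
  have h3: "Im (M$$(0,0)) + Im ?u = 0"
    using psd2D[OF assms(1), of 1 1] assms(2) by (simp add: qf2_def algebra_simps)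
  have h4: "Im (M$$(0,0)) = 0"
    using psd2D[OF assms(1), of 1 0] assms(2) by (simp add: qf2_def algebra_simps)
  have h5: "Im (M$$(0,0)) + Re ?w = 0"
    using psd2D[OF assms(1), of 1 "\<i>"] assms(2) by (simp add: qf2_def algebra_simps)
  have "Re ?u = 0" using real_lin_nonneg h1 by blast
  moreover have "Im ?w = 0" using real_lin_nonneg[of "Re (M$$(0,0))" "- Im ?w"] h2 by auto
  ultimately show ?thesis using h3 h4 h5 by (simp add: complex_eq_iff)
qed


definition rho0 :: "complex mat \<Rightarrow> complex mat" where
  "rho0 x = mat 2 2 (\<lambda>(i,j). x $$ (i,j))"
definition rho1 :: "complex mat \<Rightarrow> complex mat" where
  "rho1 x = mat 1 1 (\<lambda>_. x $$ (2,2))"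

lemma rho0_carrier[simp]: "rho0 x \<in> carrier_mat 2 2" by (simp add: rho0_def)
lemma rho1_carrier[simp]: "rho1 x \<in> carrier_mat 1 1" by (simp add: rho1_def)

lemma star_rep0: "star_rep 3 (AA l) 2 rho0"
  unfolding star_rep_def lin_on_def A_eq_D
  by (auto simp: rho0_def M2_plus_C_def scalar_prod_def sum3 sum2 adj_eq less2 intro!: eq_matI)

lemma star_rep1: "star_rep 3 (AA l) 1 rho1"
  unfolding star_rep_def lin_on_def A_eq_D
  by (auto simp: rho1_def M2_plus_C_def scalar_prod_def sum3 adj_eq intro!: eq_matI)

lemma irr0: "irreducible_rep 3 (AA l) 2 rho0"
  unfolding irreducible_rep_def
proof (intro conjI star_rep0 ballI impI)
  fix P :: "complex mat" assume P: "P \<in> carrier_mat 2 2"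
    and h: "P * P = P \<and> mat_adjoint P = P \<and> (\<forall>x\<in>AA l. P * rho0 x = rho0 x * P)"
  have c1: "P * rho0 (E 0 0) = rho0 (E 0 0) * P" using h E00_in by blast
  have c2: "P * rho0 (E 0 1) = rho0 (E 0 1) * P" using h E01_in by blast
  have a1: "P$$(0,1) = 0" using arg_cong[OF c1, of "\<lambda>M. M$$(0,1)"] P
    by (simp add: rho0_def E_def scalar_prod_def sum2)
  have a2: "P$$(1,0) = 0" using arg_cong[OF c1, of "\<lambda>M. M$$(1,0)"] P
    by (simp add: rho0_def E_def scalar_prod_def sum2)
  have a3: "P$$(0,0) = P$$(1,1)" using arg_cong[OF c2, of "\<lambda>M. M$$(0,1)"] P
    by (simp add: rho0_def E_def scalar_prod_def sum2)
  have a4: "P$$(0,0) * P$$(0,0) = P$$(0,0)" using arg_cong[OF conjunct1[OF h], of "\<lambda>M. M$$(0,0)"] P a1 a2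
    by (simp add: scalar_prod_def sum2)
  then have "P$$(0,0) = 0 \<or> P$$(0,0) = 1"
    by (metis mult_cancel_right1 mult_zero_right)
  then show "P = 0\<^sub>m 2 2 \<or> P = 1\<^sub>m 2"
    using P a1 a2 a3 by (auto intro!: eq_matI simp: less2)
qed simp

lemma irr1: "irreducible_rep 3 (AA l) 1 rho1"
  unfolding irreducible_rep_def
proof (intro conjI star_rep1 ballI impI)
  fix P :: "complex mat" assume P: "P \<in> carrier_mat 1 1"
    and h: "P * P = P \<and> mat_adjoint P = P \<and> (\<forall>x\<in>AA l. P * rho1 x = rho1 x * P)"
  have a4: "P$$(0,0) * P$$(0,0) = P$$(0,0)" using arg_cong[OF conjunct1[OF h], of "\<lambda>M. M$$(0,0)"] P
    by (simp add: scalar_prod_def)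
  then have "P$$(0,0) = 0 \<or> P$$(0,0) = 1"
    by (metis mult_cancel_right1 mult_zero_right)
  then show "P = 0\<^sub>m 1 1 \<or> P = 1\<^sub>m 1"
    using P by (auto intro!: eq_matI)
qed simp



lemma R_zero:
  assumes R: "psd 2 R" and ha: "qf2 R 1 a = 0" and hb: "qf2 R 1 b = 0"
    and a: "a = 1 \<or> a = -1" and b: "b = \<i> \<or> b = -\<i>"
  shows "R = 0\<^sub>m 2 2"
proof -
  have R2: "R \<in> carrier_mat 2 2" using R by (simp add: psd_def)
  note f1 = psd2D[OF R, of 1 0] and f2 = psd2D[OF R, of 0 1] and f3 = psd2D[OF R, of 1 1]
    and f4 = psd2D[OF R, of 1 "\<i>"] and f5 = psd2D[OF R, of 1 "a+b"]
    and f6 = psd2D[OF R, of "cnj (a+b)" 1]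
  have "R$$(0,0) = 0 \<and> R$$(1,1) = 0 \<and> R$$(0,1) = 0 \<and> R$$(1,0) = 0"
    using a b f1 f2 f3 f4 f5 f6 ha hb
    by (auto simp: qf2_def complex_eq_iff algebra_simps)
  then show ?thesis using R2 by (auto intro!: eq_matI simp: less2)
qed
lemma key_q:
  assumes car: "P \<in> carrier_mat 2 2" "Q \<in> carrier_mat 2 2" "R \<in> carrier_mat 2 2" "X \<in> carrier_mat 2 2" "Y \<in> carrier_mat 2 2"
    and hX: "X + l \<cdot>\<^sub>m R = rho0 (T_lam l)" and hY: "Y + cnj l \<cdot>\<^sub>m R = rho0 (mat_adjoint (T_lam l))"
    and hI: "P + Q + R = 1\<^sub>m 2" and w: "w * cnj w = 1"
  shows "qf2 (P + Q + (- cnj w) \<cdot>\<^sub>m X + (- w) \<cdot>\<^sub>m Y) 1 w = - (1 - cnj w * l - w * cnj l) * qf2 R 1 w"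
proof -
  have ex: "X$$(i,j) + l * R$$(i,j) = rho0 (T_lam l) $$ (i,j)"
    if "i < 2" "j < 2" for i j using arg_cong[OF hX, of "\<lambda>M. M$$(i,j)"] car that by simp
  have ey: "Y$$(i,j) + cnj l * R$$(i,j) = rho0 (mat_adjoint (T_lam l)) $$ (i,j)"
    if "i < 2" "j < 2" for i j using arg_cong[OF hY, of "\<lambda>M. M$$(i,j)"] car that by simp
  have ei: "P$$(i,j) + Q$$(i,j) + R$$(i,j) = 1\<^sub>m 2 $$ (i,j)"
    if "i < 2" "j < 2" for i j using arg_cong[OF hI, of "\<lambda>M. M$$(i,j)"] car that by (simp add: add.assoc)
  have r0: "rho0 (T_lam l) $$ (0,0) = 0" "rho0 (T_lam l) $$ (0,1) = 1" "rho0 (T_lam l) $$ (1,0) = 0" "rho0 (T_lam l) $$ (1,1) = 0"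
    by (simp_all add: rho0_def T_eq)
  have r1: "rho0 (mat_adjoint (T_lam l)) $$ (0,0) = 0" "rho0 (mat_adjoint (T_lam l)) $$ (0,1) = 0" "rho0 (mat_adjoint (T_lam l)) $$ (1,0) = 1" "rho0 (mat_adjoint (T_lam l)) $$ (1,1) = 0"
    by (simp_all add: rho0_def T_eq adj_eq)
  have x: "X$$(0,0) = - (l * R$$(0,0))" "X$$(0,1) = 1 - l * R$$(0,1)" "X$$(1,0) = - (l * R$$(1,0))" "X$$(1,1) = - (l * R$$(1,1))"
    using ex[of 0 0] ex[of 0 1] ex[of 1 0] ex[of 1 1] r0 by (simp_all add: eq_neg_iff_add_eq_0 eq_diff_eq)
  have y: "Y$$(0,0) = - (cnj l * R$$(0,0))" "Y$$(0,1) = - (cnj l * R$$(0,1))" "Y$$(1,0) = 1 - cnj l * R$$(1,0)" "Y$$(1,1) = - (cnj l * R$$(1,1))"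
    using ey[of 0 0] ey[of 0 1] ey[of 1 0] ey[of 1 1] r1 by (simp_all add: eq_neg_iff_add_eq_0 eq_diff_eq)
  have p: "P$$(0,0) = 1 - Q$$(0,0) - R$$(0,0)" "P$$(0,1) = - Q$$(0,1) - R$$(0,1)"
     "P$$(1,0) = - Q$$(1,0) - R$$(1,0)" "P$$(1,1) = 1 - Q$$(1,1) - R$$(1,1)"
    using ei[of 0 0] ei[of 0 1] ei[of 1 0] ei[of 1 1] by (simp_all add: algebra_simps eq_neg_iff_add_eq_0 eq_diff_eq)
  have "qf2 (P + Q + (- cnj w) \<cdot>\<^sub>m X + (- w) \<cdot>\<^sub>m Y) 1 w =
     (P$$(0,0) + Q$$(0,0) - cnj w * X$$(0,0) - w * Y$$(0,0)) + (P$$(0,1) + Q$$(0,1) - cnj w * X$$(0,1) - w * Y$$(0,1)) * w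
     + cnj w * ((P$$(1,0) + Q$$(1,0) - cnj w * X$$(1,0) - w * Y$$(1,0)) + (P$$(1,1) + Q$$(1,1) - cnj w * X$$(1,1) - w * Y$$(1,1)) * w)"
    using car by (simp add: qf2_def algebra_simps)
  also have "\<dots> = - (1 - cnj w * l - w * cnj l) * qf2 R 1 w + (1 - w * cnj w)"
    unfolding qf2_def x y p complex_cnj_one by (simp add: algebra_simps)
  also have "\<dots> = - (1 - cnj w * l - w * cnj l) * qf2 R 1 w" using w by simp
  finally show ?thesis .
qed


lemma A_closed: "x \<in> AA l \<Longrightarrow> y \<in> AA l \<Longrightarrow> x + y \<in> AA l"
  "x \<in> AA l \<Longrightarrow> c \<cdot>\<^sub>m x \<in> AA l" "x \<in> AA l \<Longrightarrow> y \<in> AA l \<Longrightarrow> x * y \<in> AA l"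
  by (auto intro: cstar_gen.intros)

lemma one_in: "1\<^sub>m 3 \<in> AA l" by (rule cstar_gen.one)

lemma one_S: "1\<^sub>m 3 \<in> SS l"
proof -
  have "1\<^sub>m 3 = 1 \<cdot>\<^sub>m 1\<^sub>m 3 + 0 \<cdot>\<^sub>m T_lam l + 0 \<cdot>\<^sub>m mat_adjoint (T_lam l)"
    by (rule eq_matI) (auto simp: T_eq adj_eq)
  then show ?thesis unfolding opsys_def by blast
qed
lemma T_S: "T_lam l \<in> SS l"
proof -
  have "T_lam l = 0 \<cdot>\<^sub>m 1\<^sub>m 3 + 1 \<cdot>\<^sub>m T_lam l + 0 \<cdot>\<^sub>m mat_adjoint (T_lam l)"
    by (rule eq_matI) (auto simp: T_eq adj_eq)
  then show ?thesis unfolding opsys_def by blast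
qed
lemma Ta_S: "mat_adjoint (T_lam l) \<in> SS l"
proof -
  have "mat_adjoint (T_lam l) = 0 \<cdot>\<^sub>m 1\<^sub>m 3 + 0 \<cdot>\<^sub>m T_lam l + 1 \<cdot>\<^sub>m mat_adjoint (T_lam l)"
    by (rule eq_matI) (auto simp: T_eq adj_eq)
  then show ?thesis unfolding opsys_def by blast
qed

lemma one_E: "1\<^sub>m 3 = E 0 0 + E 1 1 + E 2 2"
  by (rule eq_matI) (auto simp: E_def less3)

locale ucpA =
  fixes l :: complex and k :: nat and \<phi> :: "complex mat \<Rightarrow> complex mat"
  assumes ucp: "ucp 3 (AA l) k \<phi>"
begin

lemma car: "x \<in> AA l \<Longrightarrow> \<phi> x \<in> carrier_mat k k"
  using ucp unfolding ucp_def by blast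
lemma add: "x \<in> AA l \<Longrightarrow> y \<in> AA l \<Longrightarrow> \<phi> (x + y) = \<phi> x + \<phi> y"
  using ucp unfolding ucp_def lin_on_def by blast
lemma smult: "x \<in> AA l \<Longrightarrow> \<phi> (c \<cdot>\<^sub>m x) = c \<cdot>\<^sub>m \<phi> x"
  using ucp unfolding ucp_def lin_on_def by blast
lemma unit: "\<phi> (1\<^sub>m 3) = 1\<^sub>m k"
  using ucp unfolding ucp_def by blast
lemma cp: "(\<forall>i<m. \<forall>j<m. a i j \<in> AA l) \<Longrightarrow> psd (m * 3) (blockmat m 3 a) \<Longrightarrow>
            psd (m * k) (blockmat m k (\<lambda>i j. \<phi> (a i j)))"
  using ucp unfolding ucp_def by blast

lemma pos: assumes "x \<in> AA l" "psd 3 x" shows "psd k (\<phi> x)"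
proof -
  have x3: "x \<in> carrier_mat 3 3" using assms(2) by (simp add: psd_def)
  have "psd (1 * k) (blockmat 1 k (\<lambda>i j. \<phi> ((\<lambda>i j. x) i j)))"
    by (rule cp) (use assms blockmat1[OF x3] in auto)
  then show ?thesis using blockmat1[OF car[OF assms(1)]] by simp
qed

lemma decomp: assumes x: "x \<in> AA l"
  shows "\<phi> x = x$$(0,0) \<cdot>\<^sub>m \<phi> (E 0 0) + x$$(0,1) \<cdot>\<^sub>m \<phi> (E 0 1) + x$$(1,0) \<cdot>\<^sub>m \<phi> (E 1 0)
     + x$$(1,1) \<cdot>\<^sub>m \<phi> (E 1 1) + x$$(2,2) \<cdot>\<^sub>m \<phi> (E 2 2)"
proof -
  have xD: "x \<in> M2_plus_C" using x A_eq_D by blast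
  note ins = E00_in[of l] E01_in[of l] E10_in[of l] E11_in[of l] E22_in[of l]
  have "\<phi> x = \<phi> (x$$(0,0) \<cdot>\<^sub>m E 0 0 + x$$(0,1) \<cdot>\<^sub>m E 0 1 + x$$(1,0) \<cdot>\<^sub>m E 1 0 + x$$(1,1) \<cdot>\<^sub>m E 1 1 + x$$(2,2) \<cdot>\<^sub>m E 2 2)"
    using D_decomp[OF xD] by simp
  also have "\<dots> = x$$(0,0) \<cdot>\<^sub>m \<phi> (E 0 0) + x$$(0,1) \<cdot>\<^sub>m \<phi> (E 0 1) + x$$(1,0) \<cdot>\<^sub>m \<phi> (E 1 0)
     + x$$(1,1) \<cdot>\<^sub>m \<phi> (E 1 1) + x$$(2,2) \<cdot>\<^sub>m \<phi> (E 2 2)"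
    by (simp only: add smult A_closed ins)
  finally show ?thesis .
qed

end


lemma sum4': "(\<Sum>i<4::nat. f i) = f 0 + f 1 + f 2 + f 3"
  by (simp add: eval_nat_numeral)
lemma sum4: "(\<Sum>i\<in>{0..<4::nat}. f i) = f 0 + f 1 + f 2 + f 3"
  by (simp add: eval_nat_numeral atLeast0LessThan)

lemma psd4D: assumes "psd 4 M"
  shows "Re (M$$(0,0) - M$$(0,3) - M$$(3,0) + M$$(3,3)) \<ge> 0"
proof -
  define v where "v = vec 4 (\<lambda>i. if i = 0 then -1 else if i = 3 then (1::complex) else 0)"
  have v: "v \<in> carrier_vec 4" by (simp add: v_def)
  have M: "M \<in> carrier_mat 4 4" using assms by (simp add: psd_def)
  have "(\<Sum>i<4. cnj (v $ i) * (M *\<^sub>v v) $ i) = M$$(0,0) - M$$(0,3) - M$$(3,0) + M$$(3,3)"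
    using M by (simp add: sum4' v_def scalar_prod_def sum4)
  then show ?thesis using assms v unfolding psd_def Let_def by metis
qed

lemma qzero: assumes "Im q = 0" "Re q \<ge> 0" "Re (- c * q) \<ge> 0" "Im c = 0" "Re c > 0"
  shows "q = 0"
proof -
  have "Re (- c * q) = - (Re c * Re q)" using assms by simp
  then have "Re c * Re q \<le> 0" using assms by linarith
  then have "Re q \<le> 0" using assms(5) by (simp add: mult_le_0_iff)
  then show ?thesis using assms by (simp add: complex_eq_iff)
qed

definition pw :: "complex \<Rightarrow> complex mat" where
  "pw w = E 0 0 + E 1 1 + (- cnj w) \<cdot>\<^sub>m E 0 1 + (- w) \<cdot>\<^sub>m E 1 0"

lemma pw_in: "pw w \<in> AA l"
  unfolding pw_def by (intro A_closed E00_in E01_in E10_in E11_in)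

lemma pw_psd: assumes "w * cnj w = 1" shows "psd 3 (pw w)"
  by (rule psd_rank1[where u = "\<lambda>r. if r = 0 then 1 else if r = 1 then - w else 0"])
     (use assms in \<open>auto simp: pw_def E_def less3\<close>)

lemma Eii_psd: "i < 3 \<Longrightarrow> psd 3 (E i i)"
  by (rule psd_rank1[where u = "\<lambda>r. if r = i then 1 else 0"]) (auto simp: E_def)

lemma Eblock_psd: "psd (2 * 3) (blockmat 2 3 (\<lambda>i j. E i j))"
  by (rule psd_rank1[where u = "\<lambda>r. if r mod 3 = r div 3 then 1 else 0"])
     (auto simp: blockmat_def E_def)

context ucpA begin

lemma facts:
  "\<phi> (T_lam l) = \<phi> (E 0 1) + l \<cdot>\<^sub>m \<phi> (E 2 2)"
  "\<phi> (mat_adjoint (T_lam l)) = \<phi> (E 1 0) + cnj l \<cdot>\<^sub>m \<phi> (E 2 2)"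
  "\<phi> (E 0 0) + \<phi> (E 1 1) + \<phi> (E 2 2) = 1\<^sub>m k"
  "\<phi> (pw w) = \<phi> (E 0 0) + \<phi> (E 1 1) + (- cnj w) \<cdot>\<^sub>m \<phi> (E 0 1) + (- w) \<cdot>\<^sub>m \<phi> (E 1 0)"
proof -
  note ins = E00_in[of l] E01_in[of l] E10_in[of l] E11_in[of l] E22_in[of l]
  show "\<phi> (T_lam l) = \<phi> (E 0 1) + l \<cdot>\<^sub>m \<phi> (E 2 2)"
    unfolding T_E by (simp only: add smult A_closed ins)
  show "\<phi> (mat_adjoint (T_lam l)) = \<phi> (E 1 0) + cnj l \<cdot>\<^sub>m \<phi> (E 2 2)"
    unfolding Tadj_E by (simp only: add smult A_closed ins)
  have "\<phi> (E 0 0 + E 1 1 + E 2 2) = 1\<^sub>m k" using unit one_E by simp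
  then show "\<phi> (E 0 0) + \<phi> (E 1 1) + \<phi> (E 2 2) = 1\<^sub>m k"
    by (simp only: add smult A_closed ins)
  show "\<phi> (pw w) = \<phi> (E 0 0) + \<phi> (E 1 1) + (- cnj w) \<cdot>\<^sub>m \<phi> (E 0 1) + (- w) \<cdot>\<^sub>m \<phi> (E 1 0)"
    unfolding pw_def by (simp only: add smult A_closed ins)
qed

lemma H1_q:
  assumes k2: "k = 2" and agree: "\<forall>x\<in>SS l. \<phi> x = rho0 x"
    and w: "w * cnj w = 1" and c: "Im (1 - cnj w * l - w * cnj l) = 0" "Re (1 - cnj w * l - w * cnj l) > 0"
  shows "qf2 (\<phi> (E 2 2)) 1 w = 0"
proof -
  note ins = E00_in[of l] E01_in[of l] E10_in[of l] E11_in[of l] E22_in[of l]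
  have cars: "\<phi> (E 0 0) \<in> carrier_mat 2 2" "\<phi> (E 1 1) \<in> carrier_mat 2 2" "\<phi> (E 2 2) \<in> carrier_mat 2 2"
     "\<phi> (E 0 1) \<in> carrier_mat 2 2" "\<phi> (E 1 0) \<in> carrier_mat 2 2"
    using car[OF ins(1)] car[OF ins(2)] car[OF ins(3)] car[OF ins(4)] car[OF ins(5)] k2 by auto
  have hX: "\<phi> (E 0 1) + l \<cdot>\<^sub>m \<phi> (E 2 2) = rho0 (T_lam l)"
    using facts(1) agree T_S by metis
  have hY: "\<phi> (E 1 0) + cnj l \<cdot>\<^sub>m \<phi> (E 2 2) = rho0 (mat_adjoint (T_lam l))"
    using facts(2) agree Ta_S by metis
  have hI: "\<phi> (E 0 0) + \<phi> (E 1 1) + \<phi> (E 2 2) = 1\<^sub>m 2" using facts(3) k2 by simp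
  have eq: "qf2 (\<phi> (pw w)) 1 w = - (1 - cnj w * l - w * cnj l) * qf2 (\<phi> (E 2 2)) 1 w"
    unfolding facts(4) by (rule key_q[OF cars(1,2,3,4,5) hX hY hI w])
  have R: "psd 2 (\<phi> (E 2 2))" using pos[OF ins(5) Eii_psd[of 2]] k2 by simp
  have pp: "psd 2 (\<phi> (pw w))" using pos[OF pw_in pw_psd[OF w]] k2 by simp
  show ?thesis
    by (rule qzero[OF conjunct1[OF psd2D[OF R]] conjunct2[OF psd2D[OF R]] _ c])
       (use psd2D[OF pp, of 1 w] eq in simp)
qed

end


context ucpA begin

lemma H1:
  assumes k2: "k = 2" and agree: "\<forall>x\<in>SS l. \<phi> x = rho0 x" and x: "x \<in> AA l"
  shows "\<phi> x = rho0 x"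
proof -
  note ins = E00_in[of l] E01_in[of l] E10_in[of l] E11_in[of l] E22_in[of l]
  have cars: "\<phi> (E 0 0) \<in> carrier_mat 2 2" "\<phi> (E 1 1) \<in> carrier_mat 2 2" "\<phi> (E 2 2) \<in> carrier_mat 2 2"
     "\<phi> (E 0 1) \<in> carrier_mat 2 2" "\<phi> (E 1 0) \<in> carrier_mat 2 2"
    using car[OF ins(1)] car[OF ins(2)] car[OF ins(3)] car[OF ins(4)] car[OF ins(5)] k2 by auto
  obtain a where a: "a = 1 \<or> a = -1" and ca: "Im (1 - cnj a * l - a * cnj l) = 0" "Re (1 - cnj a * l - a * cnj l) > 0"
  proof (cases "Re l < 1/2")
    case True then show ?thesis using that[of 1] by simp
  next
    case False then show ?thesis using that[of "-1"] by simp
  qed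
  obtain b where b: "b = \<i> \<or> b = -\<i>" and cb: "Im (1 - cnj b * l - b * cnj l) = 0" "Re (1 - cnj b * l - b * cnj l) > 0"
  proof (cases "Im l < 1/2")
    case True then show ?thesis using that[of "\<i>"] by simp
  next
    case False then show ?thesis using that[of "-\<i>"] by simp
  qed
  have wa: "a * cnj a = 1" using a by auto
  have wb: "b * cnj b = 1" using b by auto
  have R: "psd 2 (\<phi> (E 2 2))" using pos[OF ins(5) Eii_psd[of 2]] k2 by simp
  have R0: "\<phi> (E 2 2) = 0\<^sub>m 2 2"
    by (rule R_zero[OF R H1_q[OF k2 agree wa ca] H1_q[OF k2 agree wb cb] a b])
  have X: "\<phi> (E 0 1) = rho0 (T_lam l)"
    using facts(1) agree T_S R0 cars by (metis right_add_zero_mat smult_zero_mat)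
  have Y: "\<phi> (E 1 0) = rho0 (mat_adjoint (T_lam l))"
    using facts(2) agree Ta_S R0 cars by (metis right_add_zero_mat smult_zero_mat)
  have I: "\<phi> (E 0 0) + \<phi> (E 1 1) = 1\<^sub>m 2"
    using facts(3) R0 cars k2 by (metis add_carrier_mat right_add_zero_mat)
  have ei: "\<phi> (E 0 0) $$ (i,j) + \<phi> (E 1 1) $$ (i,j) = (if i = j then 1 else 0)"
    if "i < 2" "j < 2" for i j using arg_cong[OF I, of "\<lambda>M. M$$(i,j)"] cars that by simp
  have blk: "psd (2 * 2) (blockmat 2 2 (\<lambda>i j. \<phi> (E i j)))"
    using cp[OF _ Eblock_psd] ins k2 by (auto simp: less2)
  have q4: "Re (\<phi> (E 0 0) $$ (0,0) - \<phi> (E 0 1) $$ (0,1) - \<phi> (E 1 0) $$ (1,0) + \<phi> (E 1 1) $$ (1,1)) \<ge> 0"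
    using psd4D[OF blk[simplified]] by (simp add: blockmat_def)
  have x01: "\<phi> (E 0 1) $$ (0,1) = 1" unfolding X by (simp add: rho0_def T_eq)
  have y10: "\<phi> (E 1 0) $$ (1,0) = 1" unfolding Y by (simp add: rho0_def T_eq adj_eq)
  have Pp: "psd 2 (\<phi> (E 0 0))" using pos[OF ins(1) Eii_psd[of 0]] k2 by simp
  have Qp: "psd 2 (\<phi> (E 1 1))" using pos[OF ins(4) Eii_psd[of 1]] k2 by simp
  have p00: "Im (\<phi> (E 0 0) $$ (0,0)) = 0 \<and> Re (\<phi> (E 0 0) $$ (0,0)) \<ge> 0"
    using psd2D[OF Pp, of 1 0] by (simp add: qf2_def)
  have p11: "Im (\<phi> (E 0 0) $$ (1,1)) = 0 \<and> Re (\<phi> (E 0 0) $$ (1,1)) \<ge> 0"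
    using psd2D[OF Pp, of 0 1] by (simp add: qf2_def)
  have q00: "Im (\<phi> (E 1 1) $$ (0,0)) = 0 \<and> Re (\<phi> (E 1 1) $$ (0,0)) \<ge> 0"
    using psd2D[OF Qp, of 1 0] by (simp add: qf2_def)
  have q11: "Im (\<phi> (E 1 1) $$ (1,1)) = 0 \<and> Re (\<phi> (E 1 1) $$ (1,1)) \<ge> 0"
    using psd2D[OF Qp, of 0 1] by (simp add: qf2_def)
  have d: "\<phi> (E 0 0) $$ (0,0) = 1 \<and> \<phi> (E 0 0) $$ (1,1) = 0 \<and> \<phi> (E 1 1) $$ (0,0) = 0 \<and> \<phi> (E 1 1) $$ (1,1) = 1"
    using q4 x01 y10 p00 p11 q00 q11 ei[of 0 0] ei[of 1 1] by (auto simp: complex_eq_iff)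
  have od: "\<phi> (E 0 0) $$ (0,1) = 0 \<and> \<phi> (E 0 0) $$ (1,0) = 0"
    using psd2_offdiag1[OF Pp] d by simp
  have od2: "\<phi> (E 1 1) $$ (0,1) = 0 \<and> \<phi> (E 1 1) $$ (1,0) = 0"
    using od ei[of 0 1] ei[of 1 0] by simp
  have xD: "x \<in> M2_plus_C" using x A_eq_D by blast
  show ?thesis
    unfolding decomp[OF x] X Y using cars d od od2 R0 xD
    by (intro eq_matI) (auto simp: rho0_def T_eq adj_eq less2 M2_plus_C_def)
qed

end


lemma unit_w: assumes "cmod l > 1/2"
  shows "(l / of_real (cmod l)) * cnj (l / of_real (cmod l)) = 1"
    "cnj (l / of_real (cmod l)) * l = of_real (cmod l)"
    "(l / of_real (cmod l)) * cnj l = of_real (cmod l)"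
proof -
  have n: "cmod l \<noteq> 0" using assms by auto
  have sq: "l * cnj l = of_real ((cmod l)^2)" by (metis complex_norm_square)
  show "(l / of_real (cmod l)) * cnj (l / of_real (cmod l)) = 1"
    using n sq by (simp add: field_simps power2_eq_square)
  show "cnj (l / of_real (cmod l)) * l = of_real (cmod l)"
    using n sq by (simp add: field_simps power2_eq_square mult.commute)
  show "(l / of_real (cmod l)) * cnj l = of_real (cmod l)"
    using n sq by (simp add: field_simps power2_eq_square)
qed

context ucpA begin

lemma H2:
  assumes k1: "k = 1" and agree: "\<forall>x\<in>SS l. \<phi> x = rho1 x" and big: "cmod l > 1/2" and x: "x \<in> AA l"
  shows "\<phi> x = rho1 x"
proof -
  note ins = E00_in[of l] E01_in[of l] E10_in[of l] E11_in[of l] E22_in[of l]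
  have cars: "\<phi> (E 0 0) \<in> carrier_mat 1 1" "\<phi> (E 1 1) \<in> carrier_mat 1 1" "\<phi> (E 2 2) \<in> carrier_mat 1 1"
     "\<phi> (E 0 1) \<in> carrier_mat 1 1" "\<phi> (E 1 0) \<in> carrier_mat 1 1"
    using car[OF ins(1)] car[OF ins(2)] car[OF ins(3)] car[OF ins(4)] car[OF ins(5)] k1 by auto
  define w where "w = l / of_real (cmod l)"
  note uw = unit_w[OF big, folded w_def]
  have hX: "\<phi> (E 0 1) $$ (0,0) + l * \<phi> (E 2 2) $$ (0,0) = l"
    using arg_cong[OF facts(1), of "\<lambda>M. M$$(0,0)"] agree T_S cars by (simp add: rho1_def T_eq)
  have hY: "\<phi> (E 1 0) $$ (0,0) + cnj l * \<phi> (E 2 2) $$ (0,0) = cnj l"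
    using arg_cong[OF facts(2), of "\<lambda>M. M$$(0,0)"] agree Ta_S cars by (simp add: rho1_def T_eq adj_eq)
  have hI: "\<phi> (E 0 0) $$ (0,0) + \<phi> (E 1 1) $$ (0,0) + \<phi> (E 2 2) $$ (0,0) = 1"
    using arg_cong[OF facts(3), of "\<lambda>M. M$$(0,0)"] cars k1 by simp
  have hp: "\<phi> (pw w) $$ (0,0) = \<phi> (E 0 0) $$ (0,0) + \<phi> (E 1 1) $$ (0,0) - cnj w * \<phi> (E 0 1) $$ (0,0) - w * \<phi> (E 1 0) $$ (0,0)"
    using arg_cong[OF facts(4)[of w], of "\<lambda>M. M$$(0,0)"] cars by simp
  have P: "Im (\<phi> (E 0 0) $$ (0,0)) = 0 \<and> Re (\<phi> (E 0 0) $$ (0,0)) \<ge> 0"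
    using psd1D pos[OF ins(1) Eii_psd[of 0]] k1 by simp
  have Q: "Im (\<phi> (E 1 1) $$ (0,0)) = 0 \<and> Re (\<phi> (E 1 1) $$ (0,0)) \<ge> 0"
    using psd1D pos[OF ins(4) Eii_psd[of 1]] k1 by simp
  have pp: "Im (\<phi> (pw w) $$ (0,0)) = 0 \<and> Re (\<phi> (pw w) $$ (0,0)) \<ge> 0"
    using psd1D pos[OF pw_in pw_psd[OF uw(1)]] k1 by simp
  define r where "r = \<phi> (E 2 2) $$ (0,0)"
  have "\<phi> (pw w) $$ (0,0) = (1 - r) * (1 - 2 * of_real (cmod l))"
  proof -
    have X0: "\<phi> (E 0 1) $$ (0,0) = l * (1 - r)" using hX unfolding r_def by (simp add: algebra_simps eq_diff_eq)
    have Y0: "\<phi> (E 1 0) $$ (0,0) = cnj l * (1 - r)" using hY unfolding r_def by (simp add: algebra_simps eq_diff_eq)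
    have "\<phi> (pw w) $$ (0,0) = (1 - r) - cnj w * l * (1 - r) - w * cnj l * (1 - r)"
      unfolding hp X0 Y0 using hI unfolding r_def by (simp add: algebra_simps eq_diff_eq)
    then show ?thesis unfolding uw(2) uw(3) by (simp add: algebra_simps)
  qed
  then have "Re ((1 - r) * (1 - 2 * of_real (cmod l))) \<ge> 0" using pp by simp
  moreover have "Im r = 0" using hI P Q unfolding r_def by (simp add: complex_eq_iff)
  ultimately have "(1 - Re r) * (1 - 2 * cmod l) \<ge> 0" by simp
  then have r1: "Re r \<ge> 1" using big by (simp add: mult_nonneg_nonpos2 zero_le_mult_iff)
  have r: "r = 1" using r1 hI P Q \<open>Im r = 0\<close> unfolding r_def by (simp add: complex_eq_iff)
  have z: "\<phi> (E 0 0) $$ (0,0) = 0 \<and> \<phi> (E 1 1) $$ (0,0) = 0"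
    using hI P Q r unfolding r_def by (simp add: complex_eq_iff)
  have z2: "\<phi> (E 0 1) $$ (0,0) = 0 \<and> \<phi> (E 1 0) $$ (0,0) = 0"
    using hX hY r unfolding r_def by simp
  show ?thesis
    unfolding decomp[OF x] using cars z z2 r unfolding r_def
    by (intro eq_matI) (auto simp: rho1_def)
qed

end


lemma dm: "r < n \<Longrightarrow> (i * n + r) div n = (i::nat)" "r < n \<Longrightarrow> (i * n + r) mod n = r"
  by auto

lemma sum_split: fixes g :: "nat \<Rightarrow> 'a::comm_monoid_add" shows "(\<Sum>p<m*n. g p) = (\<Sum>i<m. \<Sum>r<n. g (i*n + r))"
proof -
  have "(\<Sum>p<m*n. g p) = (\<Sum>i<m. sum g {i*n..<i*n+n})"
    using sum.nat_group[of g n m] by simp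
  also have "\<dots> = (\<Sum>i<m. \<Sum>r<n. g (i*n + r))"
  proof (rule sum.cong[OF refl])
    fix i
    have "sum g {0 + i*n..<n + i*n} = (\<Sum>r\<in>{0..<n}. g (r + i*n))"
      by (rule sum.shift_bounds_nat_ivl)
    then show "sum g {i*n..<i*n+n} = (\<Sum>r<n. g (i*n + r))"
      by (simp add: add.commute lessThan_atLeast0)
  qed
  finally show ?thesis .
qed

definition fv :: "(nat \<Rightarrow> complex) \<Rightarrow> complex mat \<Rightarrow> complex" where
  "fv u x = (\<Sum>r<3. \<Sum>t<3. cnj (u r) * x$$(r,t) * u t)"

lemma delt: "s < (k::nat) \<Longrightarrow> (\<Sum>t<k. c * (f * (if s = t then 1 else 0)) * x t) = c * f * (x s :: complex)"
proof -
  assume s: "s < k"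
  have "(\<Sum>t<k. c * (f * (if s = t then 1 else 0)) * x t) = (\<Sum>t\<in>{..<k}. if s = t then c * f * x t else 0)"
    by (rule sum.cong) auto
  also have "\<dots> = c * f * x s" using s by (subst sum.delta', simp_all)
  finally show ?thesis .
qed

lemma cp_vec:
  assumes psd: "psd (m*3) (blockmat m 3 a)"
  shows "psd (m*k) (blockmat m k (\<lambda>i j. fv u (a i j) \<cdot>\<^sub>m 1\<^sub>m k))"
  unfolding psd_def Let_def
proof (intro conjI ballI)
  show "blockmat m k (\<lambda>i j. fv u (a i j) \<cdot>\<^sub>m 1\<^sub>m k) \<in> carrier_mat (m * k) (m * k)"
    by (simp add: blockmat_def)
  fix w :: "complex vec" assume w: "w \<in> carrier_vec (m*k)"
  define G where "G i j s = cnj (w$(i*k+s)) * fv u (a i j) * w$(j*k+s)" for i j s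
  define U where "U s = vec (m*3) (\<lambda>p. w $ ((p div 3)*k + s) * u (p mod 3))" for s
  let ?B = "blockmat m k (\<lambda>i j. fv u (a i j) \<cdot>\<^sub>m 1\<^sub>m k)"
  let ?Bl = "blockmat m 3 a"
  have L: "(\<Sum>p<m*k. cnj (w $ p) * (?B *\<^sub>v w) $ p) = (\<Sum>s<k. \<Sum>i<m. \<Sum>j<m. G i j s)"
  proof -
    have "(\<Sum>p<m*k. cnj (w $ p) * (?B *\<^sub>v w) $ p) =
          (\<Sum>p<m*k. \<Sum>q<m*k. cnj (w $ p) * (fv u (a (p div k) (q div k)) * (if p mod k = q mod k then 1 else 0)) * w $ q)"
    proof (rule sum.cong[OF refl])
      fix p assume p: "p \<in> {..<m*k}"
      then have pk: "p mod k < k" by (metis lessThan_iff mod_less_divisor nat_0_less_mult_iff zero_less_iff_neq_zero mult_0_right not_less_zero)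
      show "cnj (w $ p) * (?B *\<^sub>v w) $ p = (\<Sum>q<m*k. cnj (w $ p) * (fv u (a (p div k) (q div k)) * (if p mod k = q mod k then 1 else 0)) * w $ q)"
        using p w pk by (auto simp: blockmat_def scalar_prod_def sum_distrib_left lessThan_atLeast0 mult.assoc intro!: sum.cong)
    qed
    also have "\<dots> = (\<Sum>i<m. \<Sum>s<k. \<Sum>j<m. \<Sum>t<k. cnj (w $ (i*k+s)) * (fv u (a i j) * (if s = t then 1 else 0)) * w $ (j*k+t))"
      by (simp add: sum_split dm)
    also have "\<dots> = (\<Sum>i<m. \<Sum>s<k. \<Sum>j<m. G i j s)"
      by (simp add: G_def delt)
    also have "\<dots> = (\<Sum>s<k. \<Sum>i<m. \<Sum>j<m. G i j s)"
      by (rule sum.swap)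
    finally show ?thesis .
  qed
  have R: "(\<Sum>p<m*3. cnj (U s $ p) * (?Bl *\<^sub>v U s) $ p) = (\<Sum>i<m. \<Sum>j<m. G i j s)" for s
  proof -
    have "(\<Sum>p<m*3. cnj (U s $ p) * (?Bl *\<^sub>v U s) $ p) =
          (\<Sum>p<m*3. \<Sum>q<m*3. cnj (w $ ((p div 3)*k + s) * u (p mod 3)) * (a (p div 3) (q div 3) $$ (p mod 3, q mod 3) * (w $ ((q div 3)*k + s) * u (q mod 3))))"
    proof (rule sum.cong[OF refl])
      fix p assume p: "p \<in> {..<m*3}"
      show "cnj (U s $ p) * (?Bl *\<^sub>v U s) $ p = (\<Sum>q<m*3. cnj (w $ ((p div 3)*k + s) * u (p mod 3)) * (a (p div 3) (q div 3) $$ (p mod 3, q mod 3) * (w $ ((q div 3)*k + s) * u (q mod 3))))"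
        using p by (auto simp: U_def blockmat_def scalar_prod_def sum_distrib_left lessThan_atLeast0 intro!: sum.cong)
    qed
    also have "\<dots> = (\<Sum>i<m. \<Sum>r<3. \<Sum>j<m. \<Sum>t<3. cnj (w $ (i*k + s) * u r) * (a i j $$ (r, t) * (w $ (j*k + s) * u t)))"
      by (simp add: sum_split dm)
    also have "\<dots> = (\<Sum>i<m. \<Sum>j<m. \<Sum>r<3. \<Sum>t<3. cnj (w $ (i*k + s) * u r) * (a i j $$ (r, t) * (w $ (j*k + s) * u t)))"
      by (intro sum.cong refl sum.swap)
    also have "\<dots> = (\<Sum>i<m. \<Sum>j<m. G i j s)"
      unfolding G_def fv_def
      by (intro sum.cong refl) (simp add: sum_distrib_left sum_distrib_right mult_ac)
    finally show ?thesis .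
  qed
  have Us: "U s \<in> carrier_vec (m*3)" for s by (simp add: U_def)
  have pq: "Im (\<Sum>p<m*3. cnj (U s $ p) * (?Bl *\<^sub>v U s) $ p) = 0 \<and> Re (\<Sum>p<m*3. cnj (U s $ p) * (?Bl *\<^sub>v U s) $ p) \<ge> 0" for s
    using psd Us[of s] unfolding psd_def Let_def by blast
  have LL: "(\<Sum>p<m*k. cnj (w $ p) * (?B *\<^sub>v w) $ p) = (\<Sum>s<k. (\<Sum>p<m*3. cnj (U s $ p) * (?Bl *\<^sub>v U s) $ p))"
    unfolding L R ..
  show "Im (\<Sum>p<m*k. cnj (w $ p) * (?B *\<^sub>v w) $ p) = 0"
    unfolding LL by (subst Im_sum) (use pq in simp)
  show "0 \<le> Re (\<Sum>p<m*k. cnj (w $ p) * (?B *\<^sub>v w) $ p)"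
    unfolding LL by (subst Re_sum) (rule sum_nonneg, use pq in blast)
qed


lemma fv3: "x \<in> carrier_mat 3 3 \<Longrightarrow> u 2 = 0 \<Longrightarrow>
  fv u x = cnj (u 0) * x$$(0,0) * u 0 + cnj (u 0) * x$$(0,1) * u 1 + cnj (u 1) * x$$(1,0) * u 0 + cnj (u 1) * x$$(1,1) * u 1"
  by (simp add: fv_def sum3')

lemma ucp_fv: assumes u1: "fv u (1\<^sub>m 3) = 1"
  shows "ucp 3 (AA l) k (\<lambda>x. fv u x \<cdot>\<^sub>m 1\<^sub>m k)"
  unfolding ucp_def lin_on_def
proof (intro conjI ballI allI impI)
  fix x y assume x: "x \<in> AA l" and y: "y \<in> AA l"
  have x3: "x \<in> carrier_mat 3 3" "y \<in> carrier_mat 3 3" using x y A_eq_D by (auto simp: M2_plus_C_def)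
  have "fv u (x + y) = fv u x + fv u y" using x3
    by (simp add: fv_def sum3' algebra_simps)
  then show "fv u (x + y) \<cdot>\<^sub>m 1\<^sub>m k = fv u x \<cdot>\<^sub>m 1\<^sub>m k + fv u y \<cdot>\<^sub>m 1\<^sub>m k"
    by (auto intro!: eq_matI simp: algebra_simps)
next
  fix x c assume x: "x \<in> AA l"
  have x3: "x \<in> carrier_mat 3 3" using x A_eq_D by (auto simp: M2_plus_C_def)
  have "fv u (c \<cdot>\<^sub>m x) = c * fv u x" using x3
    by (simp add: fv_def sum3' algebra_simps)
  then show "fv u (c \<cdot>\<^sub>m x) \<cdot>\<^sub>m 1\<^sub>m k = c \<cdot>\<^sub>m (fv u x \<cdot>\<^sub>m 1\<^sub>m k)"
    by (auto intro!: eq_matI)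
next
  show "fv u (1\<^sub>m 3) \<cdot>\<^sub>m 1\<^sub>m k = 1\<^sub>m k" using u1 by (auto intro!: eq_matI)
next
  fix m a assume "psd (m * 3) (blockmat m 3 a)"
  then show "psd (m * k) (blockmat m k (\<lambda>i j. fv u (a i j) \<cdot>\<^sub>m 1\<^sub>m k))" by (rule cp_vec)
qed simp

lemma exists_u: assumes small: "cmod l \<le> 1/2"
  shows "\<exists>u::nat \<Rightarrow> complex. u 2 = 0 \<and> cnj (u 0) * u 0 + cnj (u 1) * u 1 = 1 \<and> cnj (u 0) * u 1 = l"
proof -
  define n where "n = cmod l"
  have n0: "n \<ge> 0" unfolding n_def by simp
  have nn: "n * n \<le> (1/2) * (1/2)" by (rule mult_mono) (use small n0 in \<open>auto simp: n_def\<close>)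
  define s where "s = sqrt (1 - 4 * (n*n))"
  have q4: "(1/2::real) * (1/2) = 1/4" by simp
  have h: "4 * (n*n) \<le> 1" using nn unfolding q4 by linarith
  have s0: "s \<ge> 0" unfolding s_def using h by simp
  have s2: "s * s = 1 - 4 * (n*n)" unfolding s_def using h
    by (metis diff_ge_0_iff_ge power2_eq_square real_sqrt_pow2)
  define al where "al = (1 + s) / 2"
  have al0: "al > 0" unfolding al_def using s0 by simp
  have al2: "al * al - al + n * n = 0" unfolding al_def using s2 by (simp add: field_simps) algebra
  define a where "a = sqrt al"
  have a0: "a > 0" unfolding a_def using al0 by simp
  have aa: "a * a = al" unfolding a_def using al0 by simp
  define u where "u i = (if i = 0 then complex_of_real a else if i = 1 then l / complex_of_real a else 0)" for i :: nat
  have ln: "cnj l * l = complex_of_real (n * n)" unfolding n_def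
    by (metis complex_norm_square mult.commute power2_eq_square of_real_mult)
  have c1: "cnj (l / complex_of_real a) * (l / complex_of_real a) = (cnj l * l) / (complex_of_real a * complex_of_real a)"
    by simp
  have "cnj (u 0) * u 0 + cnj (u 1) * u 1 = complex_of_real (a * a) + complex_of_real (n * n) / complex_of_real (a * a)"
    unfolding u_def using c1 ln by simp
  also have "\<dots> = complex_of_real (al + n * n / al)" unfolding aa by simp
  also have "al + n * n / al = 1" using al0 al2 by (simp add: field_simps) algebra
  finally have 1: "cnj (u 0) * u 0 + cnj (u 1) * u 1 = 1" by simp
  have 2: "cnj (u 0) * u 1 = l" unfolding u_def using a0 by simp
  show ?thesis using 1 2 by (intro exI[of _ u]) (simp add: u_def)
qed


lemma E22_comm: "x \<in> M2_plus_C \<Longrightarrow> E 2 2 * x = x * E 2 2"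
  by (rule eq_matI) (auto simp: M2_plus_C_def E_def scalar_prod_def sum3 less3)

lemma E22_right: "x \<in> M2_plus_C \<Longrightarrow> x * E 2 2 = x$$(2,2) \<cdot>\<^sub>m E 2 2"
  by (rule eq_matI) (auto simp: M2_plus_C_def E_def scalar_prod_def sum3 less3)

lemma E22_adj: "mat_adjoint (E 2 2) = E 2 2"
  by (rule eq_matI) (auto simp: adj_eq E_def)

lemma S_form: "x \<in> SS l \<Longrightarrow> \<exists>a b c. x = a \<cdot>\<^sub>m 1\<^sub>m 3 + b \<cdot>\<^sub>m T_lam l + c \<cdot>\<^sub>m mat_adjoint (T_lam l)"
  unfolding opsys_def by blast

lemma kill_E22:
  assumes small: "cmod l \<le> 1/2" and bd: "boundary_rep 3 (SS l) k \<rho>"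
  shows "\<rho> (E 2 2) = 0\<^sub>m k k"
proof -
  have irr: "irreducible_rep 3 (AA l) k \<rho>" using bd unfolding boundary_rep_def by blast
  have ext: "\<And>\<phi>. ucp 3 (AA l) k \<phi> \<Longrightarrow> (\<forall>x\<in>SS l. \<phi> x = \<rho> x) \<Longrightarrow> (\<forall>x\<in>AA l. \<phi> x = \<rho> x)"
    using bd unfolding boundary_rep_def by blast
  have sr: "star_rep 3 (AA l) k \<rho>" and k0: "0 < k"
    and proj: "\<And>P. P \<in> carrier_mat k k \<Longrightarrow> P * P = P \<and> mat_adjoint P = P \<and> (\<forall>x\<in>AA l. P * \<rho> x = \<rho> x * P) \<Longrightarrow> P = 0\<^sub>m k k \<or> P = 1\<^sub>m k"
    using irr unfolding irreducible_rep_def by blast+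
  have car: "\<And>x. x \<in> AA l \<Longrightarrow> \<rho> x \<in> carrier_mat k k"
    and mult: "\<And>x y. x \<in> AA l \<Longrightarrow> y \<in> AA l \<Longrightarrow> \<rho> (x * y) = \<rho> x * \<rho> y"
    and adj: "\<And>x. x \<in> AA l \<Longrightarrow> \<rho> (mat_adjoint x) = mat_adjoint (\<rho> x)"
    and smult: "\<And>x c. x \<in> AA l \<Longrightarrow> \<rho> (c \<cdot>\<^sub>m x) = c \<cdot>\<^sub>m \<rho> x"
    using sr unfolding star_rep_def lin_on_def by blast+
  note E22 = E22_in[of l]
  have "\<rho> (E 2 2) = 0\<^sub>m k k \<or> \<rho> (E 2 2) = 1\<^sub>m k"
  proof (rule proj[OF car[OF E22]], intro conjI ballI)
    show "\<rho> (E 2 2) * \<rho> (E 2 2) = \<rho> (E 2 2)" using mult[OF E22 E22] EE[of 2 2 2] by simp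
    show "mat_adjoint (\<rho> (E 2 2)) = \<rho> (E 2 2)" using adj[OF E22] E22_adj by simp
    fix x assume x: "x \<in> AA l"
    have "E 2 2 * x = x * E 2 2" using x A_eq_D E22_comm by blast
    then show "\<rho> (E 2 2) * \<rho> x = \<rho> x * \<rho> (E 2 2)" using mult[OF E22 x] mult[OF x E22] by simp
  qed
  moreover have "\<rho> (E 2 2) \<noteq> 1\<^sub>m k"
  proof
    assume e1: "\<rho> (E 2 2) = 1\<^sub>m k"
    obtain u :: "nat \<Rightarrow> complex" where u2: "u 2 = 0" and u1: "cnj (u 0) * u 0 + cnj (u 1) * u 1 = 1"
      and ul: "cnj (u 0) * u 1 = l" using exists_u[OF small] by blast
    have ul': "cnj (u 1) * u 0 = cnj l" using arg_cong[OF ul, of cnj] by (simp add: mult.commute)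
    have fv1: "fv u (1\<^sub>m 3) = 1" using u1 u2 by (simp add: fv3)
    have rx: "\<rho> x = x$$(2,2) \<cdot>\<^sub>m 1\<^sub>m k" if x: "x \<in> AA l" for x
    proof -
      have xD: "x \<in> M2_plus_C" using x A_eq_D by blast
      have "\<rho> x = \<rho> x * \<rho> (E 2 2)" using e1 car[OF x] by simp
      also have "\<dots> = \<rho> (x * E 2 2)" using mult[OF x E22] by simp
      also have "\<dots> = \<rho> (x$$(2,2) \<cdot>\<^sub>m E 2 2)" using E22_right[OF xD] by simp
      also have "\<dots> = x$$(2,2) \<cdot>\<^sub>m 1\<^sub>m k" using smult[OF E22] e1 by simp
      finally show ?thesis .
    qed
    have agree: "\<forall>x\<in>SS l. fv u x \<cdot>\<^sub>m 1\<^sub>m k = \<rho> x"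
    proof
      fix x assume xS: "x \<in> SS l"
      then obtain a b c where xe: "x = a \<cdot>\<^sub>m 1\<^sub>m 3 + b \<cdot>\<^sub>m T_lam l + c \<cdot>\<^sub>m mat_adjoint (T_lam l)"
        using S_form by blast
      have x3: "x \<in> carrier_mat 3 3" unfolding xe by (simp add: T_eq adj_eq)
      have "fv u x = a * (cnj (u 0) * u 0 + cnj (u 1) * u 1) + b * (cnj (u 0) * u 1) + c * (cnj (u 1) * u 0)"
        using x3 u2 unfolding fv3[of x u, OF x3 u2] by (simp add: xe T_eq adj_eq algebra_simps)
      also have "\<dots> = x$$(2,2)" unfolding u1 ul ul' xe by (simp add: T_eq adj_eq)
      finally show "fv u x \<cdot>\<^sub>m 1\<^sub>m k = \<rho> x" using rx[OF cstar_gen.gen[OF xS]] by simp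
    qed
    have "\<forall>x\<in>AA l. fv u x \<cdot>\<^sub>m 1\<^sub>m k = \<rho> x" by (rule ext[OF ucp_fv[OF fv1] agree])
    then have "fv u (E 2 2) \<cdot>\<^sub>m 1\<^sub>m k = 1\<^sub>m k" using E22 e1 by simp
    moreover have "fv u (E 2 2) = 0" using u2 by (simp add: fv3 E_def)
    ultimately have "(0::complex) \<cdot>\<^sub>m 1\<^sub>m k = 1\<^sub>m k" by simp
    then have "((0::complex) \<cdot>\<^sub>m 1\<^sub>m k) $$ (0,0) = (1\<^sub>m k :: complex mat) $$ (0,0)" by simp
    then show False using k0 by simp
  qed
  ultimately show ?thesis by blast
qed


lemma bd0: "boundary_rep 3 (SS l) 2 rho0"
  unfolding boundary_rep_def
proof (intro conjI irr0 allI impI ballI)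
  fix \<phi> x assume h: "ucp 3 (AA l) 2 \<phi> \<and> (\<forall>x\<in>SS l. \<phi> x = rho0 x)" and x: "x \<in> AA l"
  interpret ucpA l 2 \<phi> using h by (simp add: ucpA_def)
  show "\<phi> x = rho0 x" using H1[OF refl _ x] h by blast
qed

lemma bd1: assumes "cmod l > 1/2" shows "boundary_rep 3 (SS l) 1 rho1"
  unfolding boundary_rep_def
proof (intro conjI irr1 allI impI ballI)
  fix \<phi> x assume h: "ucp 3 (AA l) 1 \<phi> \<and> (\<forall>x\<in>SS l. \<phi> x = rho1 x)" and x: "x \<in> AA l"
  interpret ucpA l 1 \<phi> using h by (simp add: ucpA_def)
  show "\<phi> x = rho1 x" using H2[OF refl _ assms x] h by blast
qed

lemma bd_facts: assumes "boundary_rep 3 (SS l) k \<rho>"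
  shows "\<And>x c. x \<in> AA l \<Longrightarrow> \<rho> (c \<cdot>\<^sub>m x) = c \<cdot>\<^sub>m \<rho> x" "\<And>x. x \<in> AA l \<Longrightarrow> \<rho> x \<in> carrier_mat k k"
    "\<rho> (1\<^sub>m 3) = 1\<^sub>m k"
  using assms unfolding boundary_rep_def irreducible_rep_def star_rep_def lin_on_def by blast+

lemma rep_zero: assumes "boundary_rep 3 (SS l) k \<rho>" shows "\<rho> (0\<^sub>m 3 3) = 0\<^sub>m k k"
proof -
  have "0\<^sub>m 3 3 = (0::complex) \<cdot>\<^sub>m 1\<^sub>m 3" by (rule eq_matI) auto
  then have "\<rho> (0\<^sub>m 3 3) = 0 \<cdot>\<^sub>m 1\<^sub>m k" using bd_facts[OF assms] one_in by simp
  also have "\<dots> = 0\<^sub>m k k" by (rule eq_matI) auto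
  finally show ?thesis .
qed

theorem mainTheorem5:
  fixes l :: complex
  shows "(cmod l \<le> 1/2 \<longrightarrow> cenv_iso 3 (opsys 3 (T_lam l)) (carrier_mat 2 2) 2) \<and>
         (cmod l > 1/2 \<longrightarrow> cenv_iso 3 (opsys 3 (T_lam l)) M2_plus_C 3)"
proof (intro conjI impI)
  assume small: "cmod l \<le> 1/2"
  have sr: "star_rep 3 (AA l) 2 rho0" by (rule star_rep0)
  have onto: "rho0 ` AA l = carrier_mat 2 2"
  proof
    show "rho0 ` AA l \<subseteq> carrier_mat 2 2" by auto
    show "carrier_mat 2 2 \<subseteq> rho0 ` AA l"
    proof
      fix M :: "complex mat" assume M: "M \<in> carrier_mat 2 2"
      let ?x = "M$$(0,0) \<cdot>\<^sub>m E 0 0 + M$$(0,1) \<cdot>\<^sub>m E 0 1 + M$$(1,0) \<cdot>\<^sub>m E 1 0 + M$$(1,1) \<cdot>\<^sub>m E 1 1"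
      have "?x \<in> AA l" by (intro A_closed E00_in E01_in E10_in E11_in)
      moreover have "rho0 ?x = M" using M by (intro eq_matI) (auto simp: rho0_def E_def less2)
      ultimately show "M \<in> rho0 ` AA l" by (metis image_eqI)
    qed
  qed
  show "cenv_iso 3 (opsys 3 (T_lam l)) (carrier_mat 2 2) 2"
    unfolding cenv_iso_def
  proof (intro exI conjI)
    show "star_hom_onto (AA l) (carrier_mat 2 2) rho0"
      using sr onto unfolding star_hom_onto_def star_rep_def by blast
    show "{x \<in> AA l. rho0 x = 0\<^sub>m 2 2} = silov_ideal 3 (SS l)"
    proof
      show "{x \<in> AA l. rho0 x = 0\<^sub>m 2 2} \<subseteq> silov_ideal 3 (SS l)"
      proof
        fix x assume "x \<in> {x \<in> AA l. rho0 x = 0\<^sub>m 2 2}"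
        then have x: "x \<in> AA l" and r0: "rho0 x = 0\<^sub>m 2 2" by auto
        have xD: "x \<in> M2_plus_C" using x A_eq_D by blast
        have ent: "x$$(0,0) = 0" "x$$(0,1) = 0" "x$$(1,0) = 0" "x$$(1,1) = 0"
          using arg_cong[OF r0, of "\<lambda>M. M$$(0,0)"] arg_cong[OF r0, of "\<lambda>M. M$$(0,1)"]
            arg_cong[OF r0, of "\<lambda>M. M$$(1,0)"] arg_cong[OF r0, of "\<lambda>M. M$$(1,1)"]
          by (auto simp: rho0_def)
        have xe: "x = x$$(2,2) \<cdot>\<^sub>m E 2 2"
          using xD ent unfolding M2_plus_C_def by (intro eq_matI) (auto simp: E_def less3)
        show "x \<in> silov_ideal 3 (SS l)"
          unfolding silov_ideal_def
        proof (intro CollectI conjI x allI impI)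
          fix k \<rho> assume bd: "boundary_rep 3 (SS l) k \<rho>"
          have "\<rho> x = x$$(2,2) \<cdot>\<^sub>m \<rho> (E 2 2)" using bd_facts(1)[OF bd E22_in] xe by metis
          also have "\<dots> = 0\<^sub>m k k" unfolding kill_E22[OF small bd] by (rule eq_matI) auto
          finally show "\<rho> x = 0\<^sub>m k k" .
        qed
      qed
      show "silov_ideal 3 (SS l) \<subseteq> {x \<in> AA l. rho0 x = 0\<^sub>m 2 2}"
        using bd0 unfolding silov_ideal_def by blast
    qed
  qed
next
  assume big: "cmod l > 1/2"
  show "cenv_iso 3 (opsys 3 (T_lam l)) M2_plus_C 3"
    unfolding cenv_iso_def
  proof (intro exI conjI)
    show "star_hom_onto (AA l) M2_plus_C (\<lambda>x. x)"
      unfolding star_hom_onto_def lin_on_def using A_eq_D by auto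
    show "{x \<in> AA l. x = 0\<^sub>m 3 3} = silov_ideal 3 (SS l)"
    proof
      show "{x \<in> AA l. x = 0\<^sub>m 3 3} \<subseteq> silov_ideal 3 (SS l)"
        unfolding silov_ideal_def using rep_zero by auto
      show "silov_ideal 3 (SS l) \<subseteq> {x \<in> AA l. x = 0\<^sub>m 3 3}"
      proof
        fix x assume "x \<in> silov_ideal 3 (SS l)"
        then have x: "x \<in> AA l" and r0: "rho0 x = 0\<^sub>m 2 2" and r1: "rho1 x = 0\<^sub>m 1 1"
          using bd0 bd1[OF big] unfolding silov_ideal_def by blast+
        have xD: "x \<in> M2_plus_C" using x A_eq_D by blast
        have ent: "x$$(0,0) = 0" "x$$(0,1) = 0" "x$$(1,0) = 0" "x$$(1,1) = 0" "x$$(2,2) = 0"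
          using arg_cong[OF r0, of "\<lambda>M. M$$(0,0)"] arg_cong[OF r0, of "\<lambda>M. M$$(0,1)"]
            arg_cong[OF r0, of "\<lambda>M. M$$(1,0)"] arg_cong[OF r0, of "\<lambda>M. M$$(1,1)"]
            arg_cong[OF r1, of "\<lambda>M. M$$(0,0)"]
          by (auto simp: rho0_def rho1_def)
        have "x = 0\<^sub>m 3 3"
          using xD ent unfolding M2_plus_C_def by (intro eq_matI) (auto simp: less3)
        then show "x \<in> {x \<in> AA l. x = 0\<^sub>m 3 3}" using x by simp
      qed
    qed
  qed
qed


end
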